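(* Let $X$ be a $0$-dimensional space. Then the group $CHom(C_p(X,\mathbb Z),\mathbb Z)$ of continuous homomorphisms $C_p(X,\mathbb Z)\to\mathbb Z$ is isomorphic to the free abelian group $A(X)$: every continuous homomorphism $\phi:C_p(X,\mathbb Z)\to\mathbb Z$ has the form $\phi(f)=\sum_{x\in F}n_xf(x)$ for a finite set $F\subseteq X$ and integers $n_x$, and the map sending $\phi$ to $\sum_{x\in F}n_x x\in A(X)$ is a group isomorphism.
   Context: Spaces are Tikhonov; $0$-dimensional means having a base of clopen sets. $C_p(X,\mathbb Z)$ is the group of continuous functions $X\to\mathbb Z$ ($\mathbb Z$ discrete) with the topology of pointwise convergence; $\mathbb Z$ is discrete. $A(X)$ is the free abelian group on the set $X$. *)

theory Defs
  imports "HOL-Analysis.Analysis" "HOL-Algebra.Free_Abelian_Groups" "HOL-Algebra.Elementary_Groups"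
begin

definition zero_dimensional :: "'a topology \<Rightarrow> bool" where
  "zero_dimensional X \<longleftrightarrow>
     (\<forall>U x. openin X U \<and> x \<in> U \<longrightarrow>
        (\<exists>V. openin X V \<and> closedin X V \<and> x \<in> V \<and> V \<subseteq> U))"

definition tikhonov_space :: "'a topology \<Rightarrow> bool" where
  "tikhonov_space X \<longleftrightarrow> completely_regular_space X \<and> t1_space X"

definition Cp :: "'a topology \<Rightarrow> ('a \<Rightarrow> int) set" where
  "Cp X = {f \<in> extensional (topspace X).
             continuous_map X (discrete_topology (UNIV::int set)) f}"

definition Cp_top :: "'a topology \<Rightarrow> ('a \<Rightarrow> int) topology" where
  "Cp_top X = subtopology (product_topology (\<lambda>_. discrete_topology (UNIV::int set)) (topspace X)) (Cp X)"

definition Cp_group :: "'a topology \<Rightarrow> ('a \<Rightarrow> int) monoid" where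
  "Cp_group X = \<lparr>carrier = Cp X,
                  monoid.mult = (\<lambda>f g. restrict (\<lambda>x. f x + g x) (topspace X)),
                  one = restrict (\<lambda>_. 0) (topspace X)\<rparr>"

definition CHom_set :: "'a topology \<Rightarrow> (('a \<Rightarrow> int) \<Rightarrow> int) set" where
  "CHom_set X = {\<phi> \<in> extensional (Cp X).
      \<phi> \<in> hom (Cp_group X) integer_group \<and>
      continuous_map (Cp_top X) (discrete_topology (UNIV::int set)) \<phi>}"

definition CHom :: "'a topology \<Rightarrow> (('a \<Rightarrow> int) \<Rightarrow> int) monoid" where
  "CHom X = \<lparr>carrier = CHom_set X,
             monoid.mult = (\<lambda>\<phi> \<psi>. restrict (\<lambda>f. \<phi> f + \<psi> f) (Cp X)),
             one = restrict (\<lambda>_. 0) (Cp X)\<rparr>"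

end

theory Submission
  imports Defs
begin

definition lc :: "'a topology \<Rightarrow> ('a \<Rightarrow> int) \<Rightarrow> bool" where
  "lc X f \<longleftrightarrow> (\<forall>x\<in>topspace X. \<exists>U. openin X U \<and> x \<in> U \<and> (\<forall>y\<in>U. f y = f x))"

lemma t1:
  assumes c: "continuous_map X (discrete_topology (UNIV::int set)) f"
  shows "lc X f"
  unfolding lc_def
  proof
    fix x assume x: "x \<in> topspace X"
    have o: "openin X {y \<in> topspace X. f y \<in> {f x}}"
      by (rule openin_continuous_map_preimage[OF c]) simp
    show "\<exists>U. openin X U \<and> x \<in> U \<and> (\<forall>y\<in>U. f y = f x)" 
    proof (intro exI[of _ "{y \<in> topspace X. f y \<in> {f x}}"] conjI)
      show "x \<in> {y \<in> topspace X. f y \<in> {f x}}" using x by simp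
      show "\<forall>y\<in>{y \<in> topspace X. f y \<in> {f x}}. f y = f x" by simp
    qed (rule o)
  qed

lemma t2:
  assumes l: "lc X f"
  shows "continuous_map X (discrete_topology (UNIV::int set)) f"
  unfolding continuous_map_def
proof (intro conjI allI impI)
  fix U :: "int set"
  show "openin X {x \<in> topspace X. f x \<in> U}"
    unfolding openin_subopen[of X "{x \<in> topspace X. f x \<in> U}"]
  proof (intro ballI)
    fix x assume xx: "x \<in> {x \<in> topspace X. f x \<in> U}"
    then have x: "x \<in> topspace X" "f x \<in> U" by auto
    obtain V where V: "openin X V" "x \<in> V" "\<forall>y\<in>V. f y = f x"
      using l x(1) unfolding lc_def by blast
    have "V \<subseteq> {x \<in> topspace X. f x \<in> U}"
      using openin_subset[OF V(1)] V(3) x(2) by (simp add: subset_iff)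
    then show "\<exists>T. openin X T \<and> x \<in> T \<and> T \<subseteq> {x \<in> topspace X. f x \<in> U}"
      using V by blast
  qed
qed simp
lemma cont_lc: "continuous_map X (discrete_topology (UNIV::int set)) f \<longleftrightarrow> lc X f"
  using t1 t2 by blast

lemma Cp_iff: "f \<in> Cp X \<longleftrightarrow> f \<in> extensional (topspace X) \<and> lc X f"
  by (simp add: Cp_def cont_lc)

lemma lc_cong:
  assumes "\<And>x. x \<in> topspace X \<Longrightarrow> f x = g x" shows "lc X f = lc X g"
proof -
  have "(openin X U \<and> x \<in> U \<and> (\<forall>y\<in>U. f y = f x)) = (openin X U \<and> x \<in> U \<and> (\<forall>y\<in>U. g y = g x))" for U x
  proof (cases "openin X U \<and> x \<in> U")
    case True
    then have "U \<subseteq> topspace X" by (simp add: openin_subset)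
    then have "\<forall>y\<in>U. f y = g y" using assms by blast
    then show ?thesis using True by simp
  next
    case False
    then show ?thesis by argo
  qed
  then show ?thesis unfolding lc_def by simp
qed

lemma lc_restrict: "lc X (restrict f (topspace X)) \<longleftrightarrow> lc X f"
  by (rule lc_cong) simp

lemma lc_add: "lc X f \<Longrightarrow> lc X g \<Longrightarrow> lc X (\<lambda>y. f y + g y)"
  unfolding lc_def
proof (intro ballI)
  fix x assume f: "\<forall>x\<in>topspace X. \<exists>U. openin X U \<and> x \<in> U \<and> (\<forall>y\<in>U. f y = f x)"
    and g: "\<forall>x\<in>topspace X. \<exists>U. openin X U \<and> x \<in> U \<and> (\<forall>y\<in>U. g y = g x)"
    and x: "x \<in> topspace X"
  obtain U where U: "openin X U" "x \<in> U" "\<forall>y\<in>U. f y = f x"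
    using f x by blast
  obtain V where V: "openin X V" "x \<in> V" "\<forall>y\<in>V. g y = g x"
    using g x by blast
  have "\<forall>y\<in>U \<inter> V. f y + g y = f x + g x"
  proof
    fix y assume "y \<in> U \<inter> V"
    then have "f y = f x" "g y = g x" using U(3) V(3) by blast+
    then show "f y + g y = f x + g x" by simp
  qed
  then have "openin X (U \<inter> V) \<and> x \<in> U \<inter> V \<and> (\<forall>y\<in>U \<inter> V. f y + g y = f x + g x)"
    using openin_Int[OF U(1) V(1)] U(2) V(2) by blast
  then show "\<exists>U. openin X U \<and> x \<in> U \<and> (\<forall>y\<in>U. f y + g y = f x + g x)"
    by (rule exI)
qed

lemma lc_const: "lc X (\<lambda>y. k)"
  unfolding lc_def by (intro ballI exI[of _ "topspace X"] conjI) simp_all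

lemma lc_cmul: "lc X f \<Longrightarrow> lc X (\<lambda>y. k * f y)"
  unfolding lc_def
proof (intro ballI)
  fix x assume f: "\<forall>x\<in>topspace X. \<exists>U. openin X U \<and> x \<in> U \<and> (\<forall>y\<in>U. f y = f x)"
    and x: "x \<in> topspace X"
  then obtain U where U: "openin X U" "x \<in> U" "\<forall>y\<in>U. f y = f x" by blast
  have "\<forall>y\<in>U. k * f y = k * f x"
  proof
    fix y assume "y \<in> U"
    then have "f y = f x" using U(3) by blast
    then show "k * f y = k * f x" by simp
  qed
  then have "openin X U \<and> x \<in> U \<and> (\<forall>y\<in>U. k * f y = k * f x)" using U by blast
  then show "\<exists>U. openin X U \<and> x \<in> U \<and> (\<forall>y\<in>U. k * f y = k * f x)"
    by (rule exI)
qed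

lemma lc_sum: "finite F \<Longrightarrow> (\<And>i. i \<in> F \<Longrightarrow> lc X (e i)) \<Longrightarrow> lc X (\<lambda>y. \<Sum>i\<in>F. e i y)"
proof (induction F rule: finite_induct)
  case empty then show ?case by (simp add: lc_const)
next
  case (insert a F) then show ?case by (simp add: lc_add)
qed

lemma Cp_restrict: "lc X h \<Longrightarrow> restrict h (topspace X) \<in> Cp X"
  unfolding Cp_iff lc_restrict by simp

lemma Cp_lc: "f \<in> Cp X \<Longrightarrow> lc X f"
  unfolding Cp_iff by simp

lemma Cp_ext: "f \<in> Cp X \<Longrightarrow> f \<in> extensional (topspace X)"
  unfolding Cp_iff by simp

lemma carrier_Cp_group [simp]: "carrier (Cp_group X) = Cp X"
  by (simp add: Cp_group_def)

lemma mult_Cp_group [simp]: "f \<otimes>\<^bsub>Cp_group X\<^esub> g = restrict (\<lambda>x. f x + g x) (topspace X)"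
  by (simp add: Cp_group_def)

lemma mult_integer_group [simp]: "a \<otimes>\<^bsub>integer_group\<^esub> b = a + b"
  by (simp add: integer_group_def)

lemma hom_add:
  assumes "\<phi> \<in> hom (Cp_group X) integer_group" "f \<in> Cp X" "g \<in> Cp X"
  shows "\<phi> (restrict (\<lambda>x. f x + g x) (topspace X)) = \<phi> f + \<phi> g"
  using hom_mult[OF assms(1), of f g] assms(2,3) by simp

lemma hom_add':
  assumes "\<phi> \<in> hom (Cp_group X) integer_group" "lc X f" "lc X g"
  shows "\<phi> (restrict (\<lambda>x. f x + g x) (topspace X)) = \<phi> (restrict f (topspace X)) + \<phi> (restrict g (topspace X))"
proof -
  have "restrict (\<lambda>x. f x + g x) (topspace X) =
        restrict (\<lambda>x. restrict f (topspace X) x + restrict g (topspace X) x) (topspace X)"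
    by (rule ext) simp
  then show ?thesis using hom_add[OF assms(1) Cp_restrict[OF assms(2)] Cp_restrict[OF assms(3)]]
    by simp
qed

lemma hom_zero:
  assumes "\<phi> \<in> hom (Cp_group X) integer_group"
  shows "\<phi> (restrict (\<lambda>x. 0) (topspace X)) = 0"
proof -
  have l: "lc X (\<lambda>x. 0::int)" by (rule lc_const)
  have "\<phi> (restrict (\<lambda>x. 0 + 0) (topspace X)) = \<phi> (restrict (\<lambda>x. 0) (topspace X)) + \<phi> (restrict (\<lambda>x. 0) (topspace X))"
    using hom_add'[OF assms l l] by simp
  then show ?thesis by simp
qed

lemma hom_cmul_nat:
  assumes "\<phi> \<in> hom (Cp_group X) integer_group" "lc X f"
  shows "\<phi> (restrict (\<lambda>x. int k * f x) (topspace X)) = int k * \<phi> (restrict f (topspace X))"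
proof (induction k)
  case 0
  then show ?case using hom_zero[OF assms(1)] by (simp add: restrict_def)
next
  case (Suc k)
  have "\<phi> (restrict (\<lambda>x. f x + int k * f x) (topspace X)) = \<phi> (restrict f (topspace X)) + \<phi> (restrict (\<lambda>x. int k * f x) (topspace X))"
    by (rule hom_add'[OF assms(1) assms(2) lc_cmul[OF assms(2)]])
  then show ?case using Suc by (simp add: algebra_simps restrict_def)
qed

lemma hom_cmul:
  assumes "\<phi> \<in> hom (Cp_group X) integer_group" "lc X f"
  shows "\<phi> (restrict (\<lambda>x. k * f x) (topspace X)) = k * \<phi> (restrict f (topspace X))"
proof (cases "k \<ge> 0")
  case True
  then obtain n where "k = int n" by (metis nonneg_int_cases)
  then show ?thesis using hom_cmul_nat[OF assms] by simp
next
  case False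
  then obtain n where n: "k = - int n" by (metis nonpos_int_cases linorder_linear)
  have "\<phi> (restrict (\<lambda>x. k * f x + int n * f x) (topspace X)) = \<phi> (restrict (\<lambda>x. k * f x) (topspace X)) + \<phi> (restrict (\<lambda>x. int n * f x) (topspace X))"
    by (rule hom_add'[OF assms(1) lc_cmul[OF assms(2)] lc_cmul[OF assms(2)]])
  moreover have "(\<lambda>x. k * f x + int n * f x) = (\<lambda>x. 0)" using n by (simp add: algebra_simps)
  ultimately show ?thesis using hom_zero[OF assms(1)] hom_cmul_nat[OF assms] n by simp
qed

lemma hom_sum:
  assumes "\<phi> \<in> hom (Cp_group X) integer_group" "finite F" "\<And>i. i \<in> F \<Longrightarrow> lc X (e i)"
  shows "\<phi> (restrict (\<lambda>y. \<Sum>i\<in>F. a i * e i y) (topspace X)) = (\<Sum>i\<in>F. a i * \<phi> (restrict (e i) (topspace X)))"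
  using assms(2,3)
proof (induction F rule: finite_induct)
  case empty
  then show ?case using hom_zero[OF assms(1)] by (simp add: restrict_def)
next
  case (insert b F)
  have lb: "lc X (\<lambda>y. a b * e b y)" using insert.prems by (simp add: lc_cmul)
  have lF: "lc X (\<lambda>y. \<Sum>i\<in>F. a i * e i y)"
    using insert.prems insert.hyps by (intro lc_sum lc_cmul) auto
  have "\<phi> (restrict (\<lambda>y. a b * e b y + (\<Sum>i\<in>F. a i * e i y)) (topspace X)) =
     \<phi> (restrict (\<lambda>y. a b * e b y) (topspace X)) + \<phi> (restrict (\<lambda>y. \<Sum>i\<in>F. a i * e i y) (topspace X))"
    by (rule hom_add'[OF assms(1) lb lF])
  then show ?case using insert hom_cmul[OF assms(1), of "e b" "a b"] by (simp add: restrict_def)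
qed

lemma separate:
  assumes t1: "t1_space X" and zd: "zero_dimensional X"
    and F: "finite F" "F \<subseteq> topspace X" and x: "x \<in> F"
  shows "\<exists>e\<in>Cp X. e x = 1 \<and> (\<forall>y\<in>F - {x}. e y = 0)"
proof -
  have "closedin X (F - {x})"
    using t1 F unfolding t1_space_closedin_finite by blast
  then have "openin X (topspace X - (F - {x}))" by (rule openin_diff[OF openin_topspace])
  moreover have "x \<in> topspace X - (F - {x})" using x F by blast
  ultimately obtain V where V: "openin X V" "closedin X V" "x \<in> V" "V \<subseteq> topspace X - (F - {x})"
    using zd unfolding zero_dimensional_def by blast
  define h where "h = (\<lambda>y. if y \<in> V then 1 else (0::int))"
  have "lc X h"
    unfolding lc_def
  proof
    fix y assume y: "y \<in> topspace X"
    show "\<exists>U. openin X U \<and> y \<in> U \<and> (\<forall>z\<in>U. h z = h y)"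
    proof (cases "y \<in> V")
      case True
      have "\<forall>z\<in>V. h z = h y" using True unfolding h_def by simp
      then show ?thesis using V(1) True by blast
    next
      case False
      have "\<forall>z\<in>topspace X - V. h z = h y" using False unfolding h_def by simp
      moreover have "openin X (topspace X - V)" using V(2) by (simp add: openin_diff)
      ultimately show ?thesis using False y by blast
    qed
  qed
  then have "restrict h (topspace X) \<in> Cp X" by (rule Cp_restrict)
  moreover have "restrict h (topspace X) x = 1" using V x F unfolding h_def by auto
  moreover have "\<forall>y\<in>F - {x}. restrict h (topspace X) y = 0" using V F unfolding h_def by auto
  ultimately show ?thesis by blast
qed

lemma rep_zero:
  assumes t1: "t1_space X" and zd: "zero_dimensional X"
    and K: "finite K" "K \<subseteq> topspace X"
    and z: "\<forall>f\<in>Cp X. (\<Sum>x\<in>K. a x * f x) = 0"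
  shows "\<forall>x\<in>K. a x = 0"
proof
  fix x assume x: "x \<in> K"
  obtain e where e: "e \<in> Cp X" "e x = 1" "\<forall>y\<in>K - {x}. e y = 0"
    using separate[OF t1 zd K x] by blast
  have "(\<Sum>y\<in>K. a y * e y) = a x * e x + (\<Sum>y\<in>K - {x}. a y * e y)"
    using K(1) x by (simp add: sum.remove)
  also have "(\<Sum>y\<in>K - {x}. a y * e y) = 0"
    using e(3) by (intro sum.neutral) simp
  finally have "(\<Sum>y\<in>K. a y * e y) = a x" using e(2) by simp
  then show "a x = 0" using z e(1) by simp
qed

definition ev :: "'a topology \<Rightarrow> ('a \<Rightarrow>\<^sub>0 int) \<Rightarrow> ('a \<Rightarrow> int) \<Rightarrow> int" where
  "ev X c = restrict (\<lambda>f. \<Sum>x\<in>Poly_Mapping.keys c. poly_mapping.lookup c x * f x) (Cp X)"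

lemma sum_keys_superset:
  fixes c :: "'a \<Rightarrow>\<^sub>0 int"
  assumes "finite K" "Poly_Mapping.keys c \<subseteq> K"
  shows "(\<Sum>x\<in>Poly_Mapping.keys c. poly_mapping.lookup c x * f x) = (\<Sum>x\<in>K. poly_mapping.lookup c x * f x)"
  by (rule sum.mono_neutral_left) (use assms in \<open>auto simp: in_keys_iff\<close>)

lemma topspace_Cp_top [simp]: "topspace (Cp_top X) = Cp X"
proof -
  have "Cp X \<subseteq> topspace (product_topology (\<lambda>_. discrete_topology (UNIV::int set)) (topspace X))"
    by (auto simp: Cp_def PiE_def)
  then show ?thesis unfolding Cp_top_def by (simp add: Int_absorb1)
qed

lemma ev_apply: "f \<in> Cp X \<Longrightarrow> ev X c f = (\<Sum>x\<in>Poly_Mapping.keys c. poly_mapping.lookup c x * f x)"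
  by (simp add: ev_def)

lemma ev_hom:
  assumes "Poly_Mapping.keys c \<subseteq> topspace X"
  shows "ev X c \<in> hom (Cp_group X) integer_group"
proof (rule homI)
  fix f g assume f: "f \<in> carrier (Cp_group X)" and g: "g \<in> carrier (Cp_group X)"
  have fg: "restrict (\<lambda>x. f x + g x) (topspace X) \<in> Cp X"
    using f g by (intro Cp_restrict lc_add Cp_lc) simp_all
  have "ev X c (restrict (\<lambda>x. f x + g x) (topspace X)) =
      (\<Sum>x\<in>Poly_Mapping.keys c. poly_mapping.lookup c x * (f x + g x))"
    using fg assms by (simp add: ev_apply subset_iff)
  also have "\<dots> = ev X c f + ev X c g"
    using f g by (simp add: ev_apply distrib_left sum.distrib)
  finally show "ev X c (f \<otimes>\<^bsub>Cp_group X\<^esub> g) = ev X c f \<otimes>\<^bsub>integer_group\<^esub> ev X c g"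
    by simp
qed simp

lemma ev_cont:
  assumes "Poly_Mapping.keys c \<subseteq> topspace X"
  shows "continuous_map (Cp_top X) (discrete_topology (UNIV::int set)) (ev X c)"
proof (rule t2)
  show "lc (Cp_top X) (ev X c)"
    unfolding lc_def
  proof
    fix f assume "f \<in> topspace (Cp_top X)"
    then have f: "f \<in> Cp X" by simp
    define S where "S = (\<lambda>i. if i \<in> Poly_Mapping.keys c then {f i} else (UNIV::int set))"
    define U where "U = PiE (topspace X) S \<inter> Cp X"
    have sub: "{i \<in> topspace X. S i \<noteq> topspace (discrete_topology UNIV)} \<subseteq> Poly_Mapping.keys c"
    proof
      fix i assume "i \<in> {i \<in> topspace X. S i \<noteq> topspace (discrete_topology UNIV)}"
      then have "S i \<noteq> UNIV" by simp
      then show "i \<in> Poly_Mapping.keys c" by (rule contrapos_np) (simp add: S_def)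
    qed
    have fin: "finite {i \<in> topspace X. S i \<noteq> topspace (discrete_topology UNIV)}"
      by (rule finite_subset[OF sub finite_keys])
    have op: "openin (product_topology (\<lambda>_. discrete_topology (UNIV::int set)) (topspace X)) (PiE (topspace X) S)"
      unfolding openin_PiE_gen
    proof (rule disjI2, rule conjI)
      show "\<forall>i\<in>topspace X. openin (discrete_topology UNIV) (S i)" by simp
    qed (rule fin)
    have o: "openin (Cp_top X) U"
      unfolding Cp_top_def U_def openin_subtopology
    proof (rule exI[of _ "PiE (topspace X) S"], rule conjI)
      show "openin (product_topology (\<lambda>_. discrete_topology (UNIV::int set)) (topspace X)) (PiE (topspace X) S)"
        by (rule op)
    qed (rule refl)
    have fS: "\<forall>i\<in>topspace X. f i \<in> S i" unfolding S_def by simp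
    have "f \<in> PiE (topspace X) S"
      unfolding PiE_iff using Cp_ext[OF f] fS by blast
    then have fU: "f \<in> U" unfolding U_def using f by blast
    have "\<forall>g\<in>U. ev X c g = ev X c f"
    proof
      fix g assume g: "g \<in> U"
      then have gC: "g \<in> Cp X" unfolding U_def by blast
      have "\<forall>i\<in>Poly_Mapping.keys c. g i = f i"
      proof
        fix i assume i: "i \<in> Poly_Mapping.keys c"
        then have "i \<in> topspace X" using assms by blast
        moreover have "g \<in> PiE (topspace X) S" using g unfolding U_def by blast
        ultimately have "g i \<in> S i" unfolding PiE_iff by blast
        then show "g i = f i" using i unfolding S_def by simp
      qed
      note eqs = this
      have "(\<Sum>x\<in>Poly_Mapping.keys c. poly_mapping.lookup c x * g x) = (\<Sum>x\<in>Poly_Mapping.keys c. poly_mapping.lookup c x * f x)"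
        by (rule sum.cong[OF refl]) (simp add: eqs)
      then show "ev X c g = ev X c f" using f gC by (simp add: ev_apply)
    qed
    note gg = this
    show "\<exists>U. openin (Cp_top X) U \<and> f \<in> U \<and> (\<forall>g\<in>U. ev X c g = ev X c f)"
      by (rule exI[of _ U]) (intro conjI o fU gg)
  qed
qed

lemma ev_CHom:
  assumes "Poly_Mapping.keys c \<subseteq> topspace X"
  shows "ev X c \<in> CHom_set X"
  unfolding CHom_set_def using ev_hom[OF assms] ev_cont[OF assms]
  by (simp add: ev_def)

lemma ev_add:
  shows "ev X (c + d) = restrict (\<lambda>f. ev X c f + ev X d f) (Cp X)"
proof (rule ext)
  fix f
  show "ev X (c + d) f = restrict (\<lambda>f. ev X c f + ev X d f) (Cp X) f"
  proof (cases "f \<in> Cp X")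
    case True
    define K where "K = Poly_Mapping.keys c \<union> Poly_Mapping.keys d"
    have K: "finite K" unfolding K_def by simp
    have "ev X (c + d) f = (\<Sum>x\<in>K. poly_mapping.lookup (c + d) x * f x)"
      using True K keys_add[of c d] by (simp add: ev_apply sum_keys_superset K_def)
    also have "\<dots> = (\<Sum>x\<in>K. poly_mapping.lookup c x * f x) + (\<Sum>x\<in>K. poly_mapping.lookup d x * f x)"
      by (simp add: lookup_add distrib_right sum.distrib)
    also have "\<dots> = ev X c f + ev X d f"
    proof -
      have "Poly_Mapping.keys c \<subseteq> K" "Poly_Mapping.keys d \<subseteq> K" unfolding K_def by auto
      then show ?thesis
        using True sum_keys_superset[OF K, of c f] sum_keys_superset[OF K, of d f] by (simp add: ev_apply)
    qed
    finally show ?thesis using True by simp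
  next
    case False
    then show ?thesis by (simp add: ev_def)
  qed
qed

lemma ev_inj:
  assumes t1: "t1_space X" and zd: "zero_dimensional X"
  shows "inj_on (ev X) {c. Poly_Mapping.keys c \<subseteq> topspace X}"
proof (rule inj_onI)
  fix c d assume c: "c \<in> {c. Poly_Mapping.keys c \<subseteq> topspace X}"
    and d: "d \<in> {c. Poly_Mapping.keys c \<subseteq> topspace X}" and eq: "ev X c = ev X d"
  define K where "K = Poly_Mapping.keys c \<union> Poly_Mapping.keys d"
  have K: "finite K" "K \<subseteq> topspace X" using c d unfolding K_def by auto
  have "\<forall>f\<in>Cp X. (\<Sum>x\<in>K. (poly_mapping.lookup c x - poly_mapping.lookup d x) * f x) = 0"
  proof
    fix f assume f: "f \<in> Cp X"
    have "ev X c f = ev X d f" using eq by simp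
    then have "(\<Sum>x\<in>K. poly_mapping.lookup c x * f x) = (\<Sum>x\<in>K. poly_mapping.lookup d x * f x)"
      using f K by (simp add: ev_apply sum_keys_superset K_def)
    then show "(\<Sum>x\<in>K. (poly_mapping.lookup c x - poly_mapping.lookup d x) * f x) = 0"
      by (simp add: left_diff_distrib sum_subtractf)
  qed
  then have z: "\<forall>x\<in>K. poly_mapping.lookup c x - poly_mapping.lookup d x = 0"
    by (rule rep_zero[OF t1 zd K])
  show "c = d"
  proof (rule poly_mapping_eqI)
    fix k show "poly_mapping.lookup c k = poly_mapping.lookup d k"
    proof (cases "k \<in> K")
      case True then show ?thesis using z by simp
    next
      case False then show ?thesis unfolding K_def by (simp add: in_keys_iff)
    qed
  qed
qed

lemma ev_surj:
  assumes t1: "t1_space X" and zd: "zero_dimensional X" and phi: "\<phi> \<in> CHom_set X"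
  shows "\<exists>c. Poly_Mapping.keys c \<subseteq> topspace X \<and> ev X c = \<phi>"
proof -
  have phiext: "\<phi> \<in> extensional (Cp X)" using phi unfolding CHom_set_def by blast
  have hom: "\<phi> \<in> hom (Cp_group X) integer_group" using phi unfolding CHom_set_def by blast
  have cont: "continuous_map (Cp_top X) (discrete_topology (UNIV::int set)) \<phi>"
    using phi unfolding CHom_set_def by blast
  define z where "z = restrict (\<lambda>x. 0::int) (topspace X)"
  have zC: "z \<in> Cp X" unfolding z_def by (rule Cp_restrict[OF lc_const])
  have phiz: "\<phi> z = 0" unfolding z_def by (rule hom_zero[OF hom])
  have lcp: "lc (Cp_top X) \<phi>" using cont_lc[THEN iffD1, OF cont] .
  have "z \<in> topspace (Cp_top X)" using zC by simp
  then obtain U where U: "openin (Cp_top X) U" "z \<in> U" "\<forall>g\<in>U. \<phi> g = \<phi> z"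
    using lcp unfolding lc_def by blast
  obtain T where T: "openin (product_topology (\<lambda>_. discrete_topology (UNIV::int set)) (topspace X)) T"
    "U = T \<inter> Cp X"
    using U(1) unfolding Cp_top_def openin_subtopology by blast
  have zT: "z \<in> T" using U(2) T(2) by blast
  have "\<exists>W. finite {i \<in> topspace X. W i \<noteq> topspace (discrete_topology (UNIV::int set))} \<and>
                 (\<forall>i \<in> topspace X. openin (discrete_topology (UNIV::int set)) (W i)) \<and> z \<in> PiE (topspace X) W \<and> PiE (topspace X) W \<subseteq> T"
    using T(1) zT unfolding openin_product_topology_alt by blast
  then obtain W where W: "finite {i \<in> topspace X. W i \<noteq> topspace (discrete_topology (UNIV::int set))}"
    "z \<in> PiE (topspace X) W" "PiE (topspace X) W \<subseteq> T"
    by blast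
  define F where "F = {i \<in> topspace X. W i \<noteq> topspace (discrete_topology (UNIV::int set))}"
  have finF: "finite F" unfolding F_def by (rule W(1))
  have Fsub: "F \<subseteq> topspace X" unfolding F_def by blast
  have kill: "\<phi> g = 0" if g: "g \<in> Cp X" and g0: "\<forall>i\<in>F. g i = 0" for g
  proof -
    have "\<forall>i\<in>topspace X. g i \<in> W i"
    proof
      fix i assume i: "i \<in> topspace X"
      show "g i \<in> W i"
      proof (cases "i \<in> F")
        case True
        have "z i \<in> W i" using W(2) i unfolding PiE_iff by blast
        moreover have "z i = 0" using i unfolding z_def by simp
        moreover have "g i = 0" using g0 True by blast
        ultimately show ?thesis by simp
      next
        case False
        then have "W i = UNIV" using i unfolding F_def by simp
        then show ?thesis by simp
      qed
    qed
    then have "g \<in> PiE (topspace X) W" unfolding PiE_iff using Cp_ext[OF g] by blast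
    then have "g \<in> U" using W(3) T(2) g by blast
    then have "\<phi> g = \<phi> z" using U(3) by blast
    then show "\<phi> g = 0" using phiz by simp
  qed
  have "\<forall>x\<in>F. \<exists>e. e \<in> Cp X \<and> e x = 1 \<and> (\<forall>y\<in>F - {x}. e y = 0)"
    using separate[OF t1 zd finF Fsub] by blast
  from bchoice[OF this] obtain e where e: "\<forall>x\<in>F. e x \<in> Cp X \<and> e x x = 1 \<and> (\<forall>y\<in>F - {x}. e x y = 0)"
    by blast
  have eC: "e x \<in> Cp X" if "x \<in> F" for x using e that by blast
  have lce: "lc X (e x)" if "x \<in> F" for x using eC[OF that] by (rule Cp_lc)
  define n where "n x = \<phi> (e x)" for x
  have rep: "\<phi> f = (\<Sum>x\<in>F. n x * f x)" if f: "f \<in> Cp X" for f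
  proof -
    define h where "h = restrict (\<lambda>y. \<Sum>x\<in>F. f x * e x y) (topspace X)"
    have lch: "lc X (\<lambda>y. \<Sum>x\<in>F. f x * e x y)"
      by (rule lc_sum[OF finF], rule lc_cmul, erule lce)
    have hC: "h \<in> Cp X" unfolding h_def by (rule Cp_restrict[OF lch])
    have "\<phi> h = (\<Sum>x\<in>F. f x * \<phi> (restrict (e x) (topspace X)))"
      unfolding h_def by (rule hom_sum[OF hom finF lce])
    also have "\<dots> = (\<Sum>x\<in>F. n x * f x)"
    proof (rule sum.cong[OF refl])
      fix x assume x: "x \<in> F"
      have "restrict (e x) (topspace X) = e x"
        by (rule extensional_restrict[OF Cp_ext[OF eC[OF x]]])
      then show "f x * \<phi> (restrict (e x) (topspace X)) = n x * f x" unfolding n_def by simp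
    qed
    finally have phih: "\<phi> h = (\<Sum>x\<in>F. n x * f x)" .
    have hF: "h i = f i" if i: "i \<in> F" for i
    proof -
      have iT: "i \<in> topspace X" using i Fsub by blast
      have "(\<Sum>x\<in>F. f x * e x i) = f i * e i i + (\<Sum>x\<in>F - {i}. f x * e x i)"
        using finF i by (simp add: sum.remove)
      also have "(\<Sum>x\<in>F - {i}. f x * e x i) = 0"
      proof (rule sum.neutral, rule ballI)
        fix x assume x: "x \<in> F - {i}"
        then have "i \<in> F - {x}" using i by blast
        then have "e x i = 0" using e x by blast
        then show "f x * e x i = 0" by simp
      qed
      finally show "h i = f i" unfolding h_def using iT e i by simp
    qed
    define g where "g = restrict (\<lambda>y. f y + (-1) * h y) (topspace X)"
    have gC: "g \<in> Cp X" unfolding g_def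
      by (rule Cp_restrict, rule lc_add[OF Cp_lc[OF f] lc_cmul[OF Cp_lc[OF hC]]])
    have "\<forall>i\<in>F. g i = 0"
    proof
      fix i assume i: "i \<in> F"
      then have "i \<in> topspace X" using Fsub by blast
      then show "g i = 0" unfolding g_def using hF[OF i] by simp
    qed
    then have phig: "\<phi> g = 0" by (rule kill[OF gC])
    have "f = restrict (\<lambda>y. g y + h y) (topspace X)"
    proof (rule ext)
      fix y show "f y = restrict (\<lambda>y. g y + h y) (topspace X) y"
      proof (cases "y \<in> topspace X")
        case True then show ?thesis unfolding g_def by simp
      next
        case False
        have "f y = undefined" by (rule extensional_arb[OF Cp_ext[OF f] False])
        then show ?thesis using False by simp
      qed
    qed
    then have "\<phi> f = \<phi> (restrict (\<lambda>y. g y + h y) (topspace X))" by (rule arg_cong)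
    also have "\<dots> = \<phi> g + \<phi> h" by (rule hom_add[OF hom gC hC])
    finally have "\<phi> f = \<phi> g + \<phi> h" .
    then show ?thesis using phig phih by simp
  qed
  define c where "c = Abs_poly_mapping (\<lambda>x. if x \<in> F then n x else 0)"
  have "{x. (if x \<in> F then n x else 0) \<noteq> 0} \<subseteq> F" by auto
  then have "finite {x. (if x \<in> F then n x else 0) \<noteq> 0}" using finF finite_subset by blast
  then have lk: "poly_mapping.lookup c = (\<lambda>x. if x \<in> F then n x else 0)"
    unfolding c_def by simp
  have kc: "Poly_Mapping.keys c \<subseteq> F"
  proof
    fix x assume "x \<in> Poly_Mapping.keys c"
    then have "poly_mapping.lookup c x \<noteq> 0" by (simp add: in_keys_iff)
    then show "x \<in> F" unfolding lk by (cases "x \<in> F") simp_all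
  qed
  have "ev X c = \<phi>"
  proof (rule ext)
    fix f show "ev X c f = \<phi> f"
    proof (cases "f \<in> Cp X")
      case True
      have "ev X c f = (\<Sum>x\<in>F. poly_mapping.lookup c x * f x)"
        using True by (simp add: ev_apply sum_keys_superset[OF finF kc])
      also have "\<dots> = (\<Sum>x\<in>F. n x * f x)" unfolding lk by simp
      also have "\<dots> = \<phi> f" using rep[OF True] by simp
      finally show ?thesis .
    next
      case False
      have "\<phi> f = undefined" by (rule extensional_arb[OF phiext False])
      then show ?thesis using False by (simp add: ev_def)
    qed
  qed
  then show ?thesis using kc Fsub by blast
qed

lemma carrier_CHom [simp]: "carrier (CHom X) = CHom_set X"
  by (simp add: CHom_def)

lemma mult_CHom [simp]: "a \<otimes>\<^bsub>CHom X\<^esub> b = restrict (\<lambda>f. a f + b f) (Cp X)"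
  by (simp add: CHom_def)

lemma ev_iso:
  assumes t1: "t1_space X" and zd: "zero_dimensional X"
  shows "ev X \<in> iso (free_Abelian_group (topspace X)) (CHom X)"
  unfolding iso_def
proof (intro CollectI conjI)
  show "ev X \<in> hom (free_Abelian_group (topspace X)) (CHom X)"
  proof (rule homI)
    fix c assume "c \<in> carrier (free_Abelian_group (topspace X))"
    then show "ev X c \<in> carrier (CHom X)" using ev_CHom by simp
  next
    fix c d
    show "ev X (c \<otimes>\<^bsub>free_Abelian_group (topspace X)\<^esub> d) = ev X c \<otimes>\<^bsub>CHom X\<^esub> ev X d"
      by (simp add: ev_add)
  qed
  have "ev X ` {c. Poly_Mapping.keys c \<subseteq> topspace X} = CHom_set X"
  proof
    show "ev X ` {c. Poly_Mapping.keys c \<subseteq> topspace X} \<subseteq> CHom_set X"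
      using ev_CHom by blast
    show "CHom_set X \<subseteq> ev X ` {c. Poly_Mapping.keys c \<subseteq> topspace X}"
    proof
      fix \<phi> assume "\<phi> \<in> CHom_set X"
      then obtain c where "Poly_Mapping.keys c \<subseteq> topspace X" "ev X c = \<phi>"
        using ev_surj[OF t1 zd] by blast
      then show "\<phi> \<in> ev X ` {c. Poly_Mapping.keys c \<subseteq> topspace X}" by blast
    qed
  qed
  then show "bij_betw (ev X) (carrier (free_Abelian_group (topspace X))) (carrier (CHom X))"
    unfolding bij_betw_def using ev_inj[OF t1 zd] by (simp add: free_Abelian_group_def)
qed

theorem lemma5p2:
  fixes X :: "'a topology"
  assumes "tikhonov_space X" and "zero_dimensional X"
  shows "(\<forall>\<phi> \<in> carrier (CHom X). \<exists>F n. finite F \<and> F \<subseteq> topspace X \<and>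
            (\<forall>f \<in> Cp X. \<phi> f = (\<Sum>x\<in>F. n x * f x)))
       \<and> (\<exists>\<Psi>. \<Psi> \<in> iso (CHom X) (free_Abelian_group (topspace X)) \<and>
            (\<forall>\<phi> \<in> carrier (CHom X). \<forall>f \<in> Cp X.
               \<phi> f = (\<Sum>x\<in>Poly_Mapping.keys (\<Psi> \<phi>). poly_mapping.lookup (\<Psi> \<phi>) x * f x)))"
proof -
  have t1: "t1_space X" using assms(1) unfolding tikhonov_space_def by blast
  have iso: "ev X \<in> iso (free_Abelian_group (topspace X)) (CHom X)"
    by (rule ev_iso[OF t1 assms(2)])
  define \<Psi> where "\<Psi> = inv_into (carrier (free_Abelian_group (topspace X))) (ev X)"
  have isoP: "\<Psi> \<in> iso (CHom X) (free_Abelian_group (topspace X))"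
    unfolding \<Psi>_def by (rule group.iso_set_sym[OF group_free_Abelian_group iso])
  have bij: "bij_betw (ev X) (carrier (free_Abelian_group (topspace X))) (carrier (CHom X))"
    using iso unfolding iso_def by blast
  have key: "\<Psi> \<phi> \<in> carrier (free_Abelian_group (topspace X)) \<and> ev X (\<Psi> \<phi>) = \<phi>"
    if phi: "\<phi> \<in> carrier (CHom X)" for \<phi>
  proof -
    have im: "\<phi> \<in> ev X ` carrier (free_Abelian_group (topspace X))"
      using bij phi unfolding bij_betw_def by blast
    show ?thesis unfolding \<Psi>_def
      using inv_into_into[OF im] f_inv_into_f[OF im] by blast
  qed
  have rep: "\<forall>\<phi> \<in> carrier (CHom X). \<forall>f \<in> Cp X.
               \<phi> f = (\<Sum>x\<in>Poly_Mapping.keys (\<Psi> \<phi>). poly_mapping.lookup (\<Psi> \<phi>) x * f x)"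
  proof (intro ballI)
    fix \<phi> f assume phi: "\<phi> \<in> carrier (CHom X)" and f: "f \<in> Cp X"
    have "\<phi> f = ev X (\<Psi> \<phi>) f" using key[OF phi] by simp
    then show "\<phi> f = (\<Sum>x\<in>Poly_Mapping.keys (\<Psi> \<phi>). poly_mapping.lookup (\<Psi> \<phi>) x * f x)"
      using f by (simp add: ev_apply)
  qed
  have first: "\<forall>\<phi> \<in> carrier (CHom X). \<exists>F n. finite F \<and> F \<subseteq> topspace X \<and>
            (\<forall>f \<in> Cp X. \<phi> f = (\<Sum>x\<in>F. n x * f x))"
  proof
    fix \<phi> assume phi: "\<phi> \<in> carrier (CHom X)"
    have "finite (Poly_Mapping.keys (\<Psi> \<phi>)) \<and> Poly_Mapping.keys (\<Psi> \<phi>) \<subseteq> topspace X \<and>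
            (\<forall>f \<in> Cp X. \<phi> f = (\<Sum>x\<in>Poly_Mapping.keys (\<Psi> \<phi>). poly_mapping.lookup (\<Psi> \<phi>) x * f x))"
      using key[OF phi] rep phi by simp
    then show "\<exists>F n. finite F \<and> F \<subseteq> topspace X \<and> (\<forall>f \<in> Cp X. \<phi> f = (\<Sum>x\<in>F. n x * f x))"
      by blast
  qed
  show ?thesis using first isoP rep by blast
qed

end
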